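(* Let $n\in\mathbb{N}$, $H\in\mathbb{R}^{n\times n}$, $W\succ 0$ in $\mathbb{R}^{n\times n}$, and $C=\mathrm{diag}(C_{11},\dots,C_{nn})$ diagonal with all $C_{ii}\ne 0$; assume $(H,C)$ observable and $(H,D)$ controllable where $W=DD^T$. Let $\Delta>0$ (the $\ell_2$-sensitivity $\Delta_{\ell_2}y$), let $\delta\in[10^{-5},10^{-1}]$, let $\epsilon>0$, and set $$\sigma=\frac{\Delta}{2\epsilon}\Big(K_\delta+\sqrt{K_\delta^2+2\epsilon}\Big),\qquad K_\delta:=\mathcal Q^{-1}(\delta),$$ and $V=\sigma^2 I_n$. Let $\Sigma$ be the unique positive semidefinite solution of $\Sigma = H\Sigma H^T - H\Sigma C^T(C\Sigma C^T+V)^{-1}C\Sigma H^T + W$. Let $B_l,B_u$ satisfy $\mathrm{tr}\,W<B_l<\mathrm{tr}\,W+\mathrm{tr}(H^TH)\lambda_n(W)$ and $B_u>\mathrm{tr}\,W$, and define $$\eta_1:=\left(\frac{(B_l-\mathrm{tr}\,W)\,\lambda_n(W)\,C_u^2}{\Delta^2\big(\mathrm{tr}(H^TH)\lambda_n(W)-B_l+\mathrm{tr}\,W\big)}\right)^{1/2},\qquad \eta_3:=\left(\frac{(B_u-\mathrm{tr}\,W)\,C_l^2}{\Delta^2\,\mathrm{tr}(H^TH)}\right)^{1/2}.$$ If $$\frac18\left(\frac{1+\sqrt{36\eta_3+1}}{\eta_3}\right)^2\le\epsilon,$$ then $\mathrm{tr}\,\Sigma\le B_u$; and if $\epsilon\le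 1/\eta_1$, then $\mathrm{tr}\,\Sigma\ge B_l$. In particular, if both inequalities on $\epsilon$ hold, then $B_l\le\mathrm{tr}\,\Sigma\le B_u$.
   Context: $\mathcal Q(y)=\frac{1}{\sqrt{2\pi}}\int_y^\infty e^{-z^2/2}\,dz$ is the Gaussian tail function and $\mathcal Q^{-1}$ its inverse. The noise level $\sigma$ is the Gaussian-mechanism noise giving $(\epsilon,\delta)$-differential privacy of the state trajectory when $\Delta$ is the sensitivity $\Delta_{\ell_2}y=\sup\{\|Cx-Cx'\|_{\ell_2}:\|x-x'\|_{\ell_2}\le B\}$; for the claim, $\Delta$ may be any positive constant. $\mathrm{tr}\,\Sigma$ is the steady-state mean squared a priori (prediction) error of the Kalman filter. $\lambda_n(W)$ is the smallest eigenvalue of $W$. $C_l:=C_{ll}$ with $l=\arg\min_i C_{ii}^2$ and $C_u:=C_{uu}$ with $u=\arg\max_i C_{ii}^2$. *)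

theory Defs
  imports "HOL-Analysis.Analysis"
begin

definition Qfun :: "real \<Rightarrow> real" where
  "Qfun y = (1 / sqrt (2 * pi)) * integral {y..} (\<lambda>z. exp (- (z\<^sup>2) / 2))"

definition Qinv :: "real \<Rightarrow> real" where
  "Qinv d = (THE y. Qfun y = d)"

primrec mpow :: "real^'n^'n \<Rightarrow> nat \<Rightarrow> real^'n^'n" where
  "mpow A 0 = mat 1"
| "mpow A (Suc k) = A ** mpow A k"

text \<open>Kalman rank conditions: the controllability matrix [D, HD, ..., H^(n-1) D]
  has rank n (its columns span R^n); the observability matrix
  [C; CH; ...; C H^(n-1)] has rank n (its rows span R^n).\<close>
definition controllable :: "real^'n^'n \<Rightarrow> real^'m^'n \<Rightarrow> bool" where
  "controllable H D \<longleftrightarrow>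
     span {column j (mpow H k ** D) | k j. k < CARD('n)} = UNIV"

definition observable :: "real^'n^'n \<Rightarrow> real^'n^'p \<Rightarrow> bool" where
  "observable H C \<longleftrightarrow>
     span {row i (C ** mpow H k) | k i. k < CARD('n)} = UNIV"

definition sym_mat :: "real^'n^'n \<Rightarrow> bool" where
  "sym_mat A \<longleftrightarrow> transpose A = A"

definition pos_def :: "real^'n^'n \<Rightarrow> bool" where
  "pos_def A \<longleftrightarrow> sym_mat A \<and> (\<forall>x. x \<noteq> 0 \<longrightarrow> x \<bullet> (A *v x) > 0)"

definition pos_semidef :: "real^'n^'n \<Rightarrow> bool" where
  "pos_semidef A \<longleftrightarrow> sym_mat A \<and> (\<forall>x. x \<bullet> (A *v x) \<ge> 0)"

definition min_eig :: "real^'n^'n \<Rightarrow> real" where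
  "min_eig A = Min {l. \<exists>v. v \<noteq> 0 \<and> A *v v = l *s v}"

definition diagonal_mat :: "real^'n^'n \<Rightarrow> bool" where
  "diagonal_mat A \<longleftrightarrow> (\<forall>i j. i \<noteq> j \<longrightarrow> A $ i $ j = 0)"

definition C_low :: "real^'n^'n \<Rightarrow> real" where
  "C_low C = C $ (arg_min (\<lambda>i. (C $ i $ i)\<^sup>2) (\<lambda>_. True)) $ (arg_min (\<lambda>i. (C $ i $ i)\<^sup>2) (\<lambda>_. True))"

definition C_up :: "real^'n^'n \<Rightarrow> real" where
  "C_up C = C $ (arg_max (\<lambda>i. (C $ i $ i)\<^sup>2) (\<lambda>_. True)) $ (arg_max (\<lambda>i. (C $ i $ i)\<^sup>2) (\<lambda>_. True))"

definition dare :: "real^'n^'n \<Rightarrow> real^'n^'n \<Rightarrow> real^'n^'n \<Rightarrow> real^'n^'n \<Rightarrow> real^'n^'n \<Rightarrow> bool" where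
  "dare H C V W S \<longleftrightarrow>
     S = H ** S ** transpose H
         - H ** S ** transpose C ** matrix_inv (C ** S ** transpose C + V) ** C ** S ** transpose H
         + W"

end

theory Submission imports Defs begin


definition gf :: "real \<Rightarrow> real" where "gf z = exp (- (z\<^sup>2) / 2)"

lemma gf_pos: "gf z > 0" by (simp add: gf_def)

lemma gf_cont: "continuous_on S gf"
  unfolding gf_def by (intro continuous_intros) auto

lemma gf_int_ab: "gf integrable_on {a..b}"
  by (rule integrable_continuous_interval[OF gf_cont])

lemma gf_tangent: "gf z \<le> exp (t\<^sup>2/2) * exp (- t * z)"
proof -
  have "- (z\<^sup>2) / 2 \<le> t\<^sup>2/2 + (- t * z)"
    using sum_squares_ge_zero[of "z - t" 0] by (simp add: power2_eq_square algebra_simps)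
  hence "exp (- (z\<^sup>2) / 2) \<le> exp (t\<^sup>2/2 + (- t * z))" by simp
  also have "\<dots> = exp (t\<^sup>2/2) * exp (- t * z)" by (rule exp_add)
  finally show ?thesis by (simp add: gf_def)
qed

lemma gf_int: "gf integrable_on {a..}"
proof (rule integrable_on_all_intervals_integrable_bound[where g = "\<lambda>z. exp (1/2) * exp (- 1 * z)"])
  fix u v :: real
  have "gf integrable_on ({a..} \<inter> cbox u v)"
  proof -
    have "{a..} \<inter> cbox u v = {max a u..v}" by auto
    thus ?thesis using gf_int_ab by simp
  qed
  thus "(\<lambda>x. if x \<in> {a..} then gf x else 0) integrable_on cbox u v"
    using integrable_restrict_Int by blast
next
  fix x show "norm (gf x) \<le> exp (1/2) * exp (- 1 * x)"
    using gf_tangent[of x 1] gf_pos[of x] by simp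
next
  show "(\<lambda>z. exp (1/2) * exp (- 1 * z)) integrable_on {a..}"
    using integrable_on_exp_minus_to_infinity[of 1 a] by simp
qed

lemma gf_split: assumes "a \<le> b"
  shows "integral {a..} gf = integral {a..b} gf + integral {b..} gf"
proof -
  have "{a..} = {a..b} \<union> {b..}" using assms by auto
  moreover have "{a..b} \<inter> {b..} = {b}" using assms by auto
  ultimately show ?thesis
    using integral_Un[OF gf_int_ab gf_int, of a b b] negligible_sing by simp
qed

lemma gf_const_lower: assumes "a \<le> b" "\<And>z. z \<in> {a..b} \<Longrightarrow> c \<le> gf z"
  shows "(b - a) * c \<le> integral {a..b} gf"
proof -
  have "integral {a..b} (\<lambda>x. c) \<le> integral {a..b} gf"
    by (rule integral_le) (use assms gf_int_ab in auto)
  thus ?thesis using assms by simp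
qed

lemma gf_ab_pos: assumes "a < b" shows "integral {a..b} gf > 0"
proof -
  have "(b - a) * exp (- (a\<^sup>2 + b\<^sup>2)/2) \<le> integral {a..b} gf"
  proof (rule gf_const_lower)
    fix z assume z: "z \<in> {a..b}"
    have "z\<^sup>2 \<le> a\<^sup>2 + b\<^sup>2"
    proof (cases "z \<ge> 0")
      case True
      hence "z\<^sup>2 \<le> b\<^sup>2" using z by (intro power_mono) auto
      thus ?thesis by (simp add: add_increasing)
    next
      case False
      hence "(-z)\<^sup>2 \<le> (-a)\<^sup>2" using z by (intro power_mono) auto
      thus ?thesis by (simp add: add_increasing2)
    qed
    thus "exp (- (a\<^sup>2 + b\<^sup>2)/2) \<le> gf z" by (simp add: gf_def)
  qed (use assms in auto)
  moreover have "(b - a) * exp (- (a\<^sup>2 + b\<^sup>2)/2) > 0" using assms by simp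
  ultimately show ?thesis by linarith
qed

lemma sqrt2pi_pos: "sqrt (2 * pi) > 0" by simp

lemma Qfun_gf: "Qfun y = (1 / sqrt (2 * pi)) * integral {y..} gf"
  unfolding Qfun_def gf_def[abs_def] by simp

lemma Qfun_strict_mono: assumes "a < b" shows "Qfun b < Qfun a"
proof -
  have "integral {b..} gf < integral {a..} gf"
    using gf_split[of a b] gf_ab_pos[OF assms] assms by simp
  thus ?thesis unfolding Qfun_gf by (simp add: divide_strict_right_mono)
qed

lemma Qfun_cont: "continuous_on {a..b} Qfun"
proof -
  have "continuous_on {a..b} (\<lambda>y. (1 / sqrt (2 * pi)) * (integral {a..} gf - integral {a..y} gf))"
    by (intro continuous_intros indefinite_integral_continuous_1 gf_int_ab)
  moreover have "\<And>y. y \<in> {a..b} \<Longrightarrow> (1 / sqrt (2 * pi)) * (integral {a..} gf - integral {a..y} gf) = Qfun y"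
  proof -
    fix y assume "y \<in> {a..b}"
    hence "integral {a..} gf = integral {a..y} gf + integral {y..} gf" by (intro gf_split) auto
    thus "(1 / sqrt (2 * pi)) * (integral {a..} gf - integral {a..y} gf) = Qfun y"
      unfolding Qfun_gf by simp
  qed
  ultimately show ?thesis by (rule continuous_on_eq)
qed



lemma gf_mono: assumes "0 \<le> z" "z \<le> r" shows "gf r \<le> gf z"
proof -
  have "z\<^sup>2 \<le> r\<^sup>2" using assms by (intro power_mono) auto
  thus ?thesis by (simp add: gf_def)
qed

lemma piece: assumes "0 \<le> a" "a \<le> b" shows "(b - a) * gf b \<le> integral {a..b} gf"
  by (rule gf_const_lower) (use assms gf_mono in auto)

lemma exp_lb: fixes x :: real assumes "x \<le> 8" shows "(1 - x / 8) ^ 8 \<le> exp (- x)"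
  using exp_ge_one_minus_x_over_n_power_n[of x 8] assms by simp

lemma Q1: "Qfun 1 > 1/10"
proof -
  have s1: "integral {1..2} gf = integral {1..5/4} gf + integral {5/4..2} gf"
    using Henstock_Kurzweil_Integration.integral_combine[where a="1" and c="5/4" and b="2" and f=gf] gf_int_ab[of "1" "2"] by simp
  have s2: "integral {5/4..2} gf = integral {5/4..3/2} gf + integral {3/2..2} gf"
    using Henstock_Kurzweil_Integration.integral_combine[where a="5/4" and c="3/2" and b="2" and f=gf] gf_int_ab[of "5/4" "2"] by simp
  have s3: "integral {3/2..2} gf = integral {3/2..7/4} gf + integral {7/4..2} gf"
    using Henstock_Kurzweil_Integration.integral_combine[where a="3/2" and c="7/4" and b="2" and f=gf] gf_int_ab[of "3/2" "2"] by simp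
  have p1: "(1/4) * gf (5/4) \<le> integral {1..5/4} gf" using piece[of 1 "5/4"] by simp
  have p2: "(1/4) * gf (3/2) \<le> integral {5/4..3/2} gf" using piece[of "5/4" "3/2"] by simp
  have p3: "(1/4) * gf (7/4) \<le> integral {3/2..7/4} gf" using piece[of "3/2" "7/4"] by simp
  have p4: "(1/4) * gf 2 \<le> integral {7/4..2} gf" using piece[of "7/4" 2] by simp
  have e1: "439/1000 \<le> gf (5/4)"
  proof -
    have "(439/1000::real) \<le> (1 - (25/32) / 8) ^ 8" by (simp add: power_divide)
    also have "\<dots> \<le> gf (5/4)" using exp_lb[of "25/32"] by (simp add: gf_def power2_eq_square)
    finally show ?thesis .
  qed
  have e2: "297/1000 \<le> gf (3/2)"
  proof -
    have "(297/1000::real) \<le> (1 - (9/8) / 8) ^ 8" by (simp add: power_divide)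
    also have "\<dots> \<le> gf (3/2)" using exp_lb[of "9/8"] by (simp add: gf_def power2_eq_square)
    finally show ?thesis .
  qed
  have e3: "182/1000 \<le> gf (7/4)"
  proof -
    have "(182/1000::real) \<le> (1 - (49/32) / 8) ^ 8" by (simp add: power_divide)
    also have "\<dots> \<le> gf (7/4)" using exp_lb[of "49/32"] by (simp add: gf_def power2_eq_square)
    finally show ?thesis .
  qed
  have e4: "100/1000 \<le> gf 2"
  proof -
    have "(100/1000::real) \<le> (1 - 2 / 8) ^ 8" by (simp add: power_divide)
    also have "\<dots> \<le> gf 2" using exp_lb[of "2"] by (simp add: gf_def power2_eq_square)
    finally show ?thesis .
  qed
  have rest: "integral {2..} gf \<ge> 0" by (rule integral_nonneg[OF gf_int]) (simp add: less_imp_le[OF gf_pos])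
  have "integral {1..} gf > 251/1000"
  proof -
    have "integral {1..} gf = integral {1..2} gf + integral {2..} gf" using gf_split[of 1 2] by simp
    thus ?thesis using s1 s2 s3 p1 p2 p3 p4 e1 e2 e3 e4 rest by linarith
  qed
  moreover have "sqrt (2 * pi) \<le> 251/100"
  proof -
    have "2 * pi \<le> (251/100)\<^sup>2" using pi_approx by (simp add: power2_eq_square)
    hence "sqrt (2 * pi) \<le> sqrt ((251/100)\<^sup>2)" by (rule real_sqrt_le_mono)
    thus ?thesis by simp
  qed
  ultimately show ?thesis unfolding Qfun_gf by (simp add: field_simps)
qed

lemma Q45: "Qfun (9/2) < 1/100000"
proof -
  let ?g = "\<lambda>z::real. exp ((9/2::real)\<^sup>2/2) * exp (- (9/2) * z)"
  have hi: "(?g has_integral exp ((9/2::real)\<^sup>2/2) * (exp (- (9/2) * (9/2)) / (9/2))) {9/2..}"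
    by (intro has_integral_mult_right has_integral_exp_minus_to_infinity) simp
  have "integral {9/2..} gf \<le> integral {9/2..} ?g"
  proof (rule integral_le[OF gf_int])
    show "?g integrable_on {9/2..}" using hi by blast
    fix z :: real show "gf z \<le> ?g z" by (rule gf_tangent)
  qed
  also have "\<dots> = exp ((9/2::real)\<^sup>2/2) * (exp (- (9/2) * (9/2)) / (9/2))" using hi by (rule integral_unique)
  also have "\<dots> = (2/9) / exp (81/8)"
    by (simp add: power2_eq_square exp_minus[symmetric] exp_add[symmetric] field_simps)
  finally have i1: "integral {9/2..} gf \<le> (2/9) / exp (81/8)" .
  have "(1 + 10 / 80) ^ 80 \<le> exp (10::real)"
    using exp_ge_one_plus_x_over_n_power_n[of 80 10] by simp
  moreover have "(1 + 10 / 80) ^ 80 > (8900::real)" by (simp add: power_divide)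
  moreover have "exp (10::real) \<le> exp (81/8)" by simp
  ultimately have ex: "exp (81/8::real) > 8900" by linarith
  have i3: "(2/9) / exp (81/8) < (2/9) / (8900::real)"
    using ex by (intro divide_strict_left_mono) auto
  have i2: "integral {9/2..} gf < 1/40000" using i1 i3 by linarith
  moreover have "sqrt (2 * pi) \<ge> 5/2"
    by (rule real_le_rsqrt) (use pi_approx in \<open>simp add: power2_eq_square\<close>)
  ultimately show ?thesis unfolding Qfun_gf by (simp add: field_simps)
qed

lemma Qinv_bounds:
  assumes "1/100000 \<le> d" "d \<le> 1/10"
  shows "1 \<le> Qinv d \<and> Qinv d \<le> 9/2"
proof -
  obtain x where x: "1 \<le> x" "x \<le> 9/2" "Qfun x = d"
    using IVT2'[of Qfun "9/2" d 1, OF _ _ _ Qfun_cont] Q1 Q45 assms by auto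
  have "Qinv d = x" unfolding Qinv_def
  proof (rule the_equality)
    show "Qfun x = d" by fact
    fix y assume "Qfun y = d"
    thus "y = x" using Qfun_strict_mono[of x y] Qfun_strict_mono[of y x] x(3)
      by (cases "x < y"; cases "y < x") auto
  qed
  with x show ?thesis by simp
qed



lemma dot_transp: "(x::real^'n) \<bullet> ((A::real^'n^'n) *v y) = (transpose A *v x) \<bullet> y"
  by (simp add: dot_lmul_matrix)

lemma sym_dot: "sym_mat A \<Longrightarrow> (x::real^'n) \<bullet> (A *v y) = (A *v x) \<bullet> y"
  using dot_transp[of x A y] by (simp add: sym_mat_def)

lemma eig_finite:
  fixes W :: "real^'n^'n" assumes sym: "sym_mat W"
  shows "finite {l. \<exists>v. v \<noteq> 0 \<and> W *v v = l *s v}"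
proof -
  define L where "L = {l. \<exists>v. v \<noteq> 0 \<and> W *v v = l *s v}"
  define ev where "ev l = (SOME v. v \<noteq> 0 \<and> W *v v = l *s v)" for l
  have ev: "ev l \<noteq> 0 \<and> W *v ev l = l *\<^sub>R ev l" if "l \<in> L" for l
  proof -
    from that obtain v where "v \<noteq> 0 \<and> W *v v = l *s v" unfolding L_def by blast
    hence "ev l \<noteq> 0 \<and> W *v ev l = l *s ev l" unfolding ev_def by (rule someI)
    thus ?thesis by (simp add: scalar_mult_eq_scaleR)
  qed
  have orth: "ev l1 \<bullet> ev l2 = 0" if "l1 \<in> L" "l2 \<in> L" "l1 \<noteq> l2" for l1 l2
  proof -
    have "l1 * (ev l1 \<bullet> ev l2) = (W *v ev l1) \<bullet> ev l2" using ev[OF that(1)] by simp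
    also have "\<dots> = ev l1 \<bullet> (W *v ev l2)" using sym_dot[OF sym] by simp
    also have "\<dots> = l2 * (ev l1 \<bullet> ev l2)" using ev[OF that(2)] by simp
    finally have "(l1 - l2) * (ev l1 \<bullet> ev l2) = 0" by (simp add: algebra_simps)
    thus ?thesis using that(3) by simp
  qed
  have inj: "inj_on ev L"
  proof (rule inj_onI)
    fix l1 l2 assume a: "l1 \<in> L" "l2 \<in> L" "ev l1 = ev l2"
    show "l1 = l2"
    proof (rule ccontr)
      assume "l1 \<noteq> l2"
      hence "ev l1 \<bullet> ev l1 = 0" using orth[OF a(1,2)] a(3) by simp
      thus False using ev[OF a(1)] by simp
    qed
  qed
  have "pairwise orthogonal (ev ` L)"
    unfolding pairwise_def orthogonal_def using orth by auto
  moreover have "0 \<notin> ev ` L" using ev by force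
  ultimately have "independent (ev ` L)" by (rule pairwise_orthogonal_independent)
  hence "finite (ev ` L)" using independent_bound by blast
  hence "finite L" by (rule finite_imageD[OF _ inj])
  thus ?thesis by (simp add: L_def)
qed

lemma rayleigh_exists:
  fixes W :: "real^'n^'n" assumes sym: "sym_mat W"
  shows "\<exists>\<mu>. (\<exists>v. v \<noteq> 0 \<and> W *v v = \<mu> *s v) \<and> (\<forall>x. \<mu> * (x \<bullet> x) \<le> x \<bullet> (W *v x))"
proof -
  let ?S = "sphere (0::real^'n) 1"
  let ?f = "\<lambda>x. x \<bullet> (W *v x)"
  have c1: "compact ?S" by simp
  have c2: "?S \<noteq> {}" by simp
  have c3: "continuous_on ?S ?f" by (intro continuous_intros)
  have "\<exists>x\<in>?S. \<forall>y\<in>?S. ?f x \<le> ?f y" by (rule continuous_attains_inf[OF c1 c2 c3])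
  then obtain x0 where x0: "x0 \<in> ?S" "\<And>y. y \<in> ?S \<Longrightarrow> ?f x0 \<le> ?f y"
    by blast
  define \<mu> where "\<mu> = ?f x0"
  have nx0: "x0 \<bullet> x0 = 1" using x0(1) by (simp add: dot_square_norm)
  have lb: "\<mu> * (x \<bullet> x) \<le> x \<bullet> (W *v x)" for x
  proof (cases "x = 0")
    case False
    let ?y = "(1/norm x) *\<^sub>R x"
    have "?y \<in> ?S" using False by simp
    hence "\<mu> \<le> ?y \<bullet> (W *v ?y)" using x0(2) unfolding \<mu>_def by blast
    also have "\<dots> = (x \<bullet> (W *v x)) / (norm x)\<^sup>2"
      by (simp add: matrix_vector_mult_scaleR power2_eq_square)
    finally have "\<mu> * (norm x)\<^sup>2 \<le> x \<bullet> (W *v x)" using False by (simp add: field_simps)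
    thus ?thesis by (simp add: dot_square_norm)
  qed simp
  define g where "g y = y \<bullet> (W *v y) - \<mu> * (y \<bullet> y)" for y
  have g0: "g y \<ge> 0" for y using lb[of y] unfolding g_def by simp
  have gx0: "g x0 = 0" unfolding g_def \<mu>_def using nx0 by simp
  define r where "r = W *v x0 - \<mu> *\<^sub>R x0"
  have expand: "g (x0 + t *\<^sub>R r) = g x0 + 2 * t * (r \<bullet> r) + t\<^sup>2 * g r" for t
  proof -
    have s1: "x0 \<bullet> (W *v r) = (W *v x0) \<bullet> r" using sym_dot[OF sym] by simp
    have "r \<bullet> r = (W *v x0) \<bullet> r - \<mu> * (x0 \<bullet> r)" unfolding r_def by (simp add: inner_diff_left)
    hence rr: "r \<bullet> (W *v x0) = r \<bullet> r + \<mu> * (r \<bullet> x0)" by (simp add: inner_commute)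
    show ?thesis unfolding g_def using s1 rr
      by (simp add: algebra_simps inner_add_left inner_add_right power2_eq_square inner_commute)
  qed
  have "r \<bullet> r = 0"
  proof -
    define b where "b = r \<bullet> r"
    define c where "c = g r"
    have b0: "b \<ge> 0" unfolding b_def by simp
    have c0: "c \<ge> 0" unfolding c_def by (rule g0)
    define t where "t = - b / (c + 2)"
    have "0 \<le> g (x0 + t *\<^sub>R r)" by (rule g0)
    also have "\<dots> = 2 * t * b + t\<^sup>2 * c" by (subst expand) (simp add: gx0 b_def c_def)
    finally have q0: "0 \<le> 2 * t * b + t\<^sup>2 * c" .
    have cp: "c + 2 \<noteq> 0" using c0 by simp
    have tc: "t * (c + 2) = - b" using cp by (simp add: t_def)
    have "(2 * t * b + t\<^sup>2 * c) * (c + 2)\<^sup>2 = 2 * b * (t * (c + 2)) * (c + 2) + c * (t * (c + 2))\<^sup>2"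
      by (simp add: power2_eq_square algebra_simps)
    also have "\<dots> = - (b\<^sup>2 * (c + 4))" unfolding tc by (simp add: power2_eq_square algebra_simps)
    finally have "0 \<le> - (b\<^sup>2 * (c + 4))" using q0 by (metis zero_le_power2 mult_nonneg_nonneg)
    hence "b\<^sup>2 * (c + 4) \<le> 0" by simp
    hence "b\<^sup>2 \<le> 0" using c0 by (simp add: mult_le_0_iff)
    thus ?thesis unfolding b_def by simp
  qed
  hence "W *v x0 = \<mu> *\<^sub>R x0" unfolding r_def by simp
  moreover have "x0 \<noteq> 0" using nx0 by auto
  ultimately show ?thesis using lb by (auto simp: scalar_mult_eq_scaleR)
qed

lemma min_eig_bound:
  fixes W :: "real^'n^'n" assumes sym: "sym_mat W"
  shows "min_eig W * (x \<bullet> x) \<le> x \<bullet> (W *v x)"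
proof -
  obtain \<mu> where mu: "\<exists>v. v \<noteq> 0 \<and> W *v v = \<mu> *s v" "\<And>x. \<mu> * (x \<bullet> x) \<le> x \<bullet> (W *v x)"
    using rayleigh_exists[OF sym] by blast
  have "min_eig W \<le> \<mu>" unfolding min_eig_def
    by (rule Min_le[OF eig_finite[OF sym]]) (use mu in simp)
  hence "min_eig W * (x \<bullet> x) \<le> \<mu> * (x \<bullet> x)" by (intro mult_right_mono) simp_all
  thus ?thesis using mu(2)[of x] by linarith
qed



lemma diag_mv:
  fixes A :: "real^'n^'n" assumes "diagonal_mat A"
  shows "A *v x = (\<chi> i. A$i$i * x$i)"
proof -
  have "(\<Sum>j\<in>UNIV. A$i$j * x$j) = A$i$i * x$i" for i
  proof -
    have "(\<Sum>j\<in>UNIV. A$i$j * x$j) = (\<Sum>j\<in>UNIV. if j = i then A$i$i * x$i else 0)"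
      by (rule sum.cong) (use assms in \<open>auto simp: diagonal_mat_def\<close>)
    thus ?thesis by simp
  qed
  thus ?thesis by (simp add: vec_eq_iff matrix_vector_mult_def)
qed

lemma diag_transpose: "diagonal_mat A \<Longrightarrow> diagonal_mat (transpose A)"
  by (simp add: diagonal_mat_def transpose_def)

lemma diag_entry: "(X::real^'n^'n) $ i $ i = axis i 1 \<bullet> (X *v axis i 1)"
  by (simp add: matrix_vector_mult_basis inner_axis' column_def)

lemma transp_axis: "transpose (H::real^'n^'n) *v axis i 1 = row i H"
  by (simp add: matrix_vector_mult_basis)

lemma trace_HtH: "trace (transpose (H::real^'n^'n) ** H) = (\<Sum>i\<in>UNIV. row i H \<bullet> row i H)"
proof -
  have "trace (transpose H ** H) = trace (H ** transpose H)" by (rule trace_mul_sym)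
  also have "\<dots> = (\<Sum>i\<in>UNIV. row i H \<bullet> row i H)" by (simp add: trace_def matrix_mult_transpose_dot_row)
  finally show ?thesis .
qed

lemma inner_sum_sq: "(x::real^'n) \<bullet> x = (\<Sum>i\<in>UNIV. (x$i)\<^sup>2)"
  by (simp add: inner_vec_def power2_eq_square)

context
  fixes C S :: "real^'n^'n" and s :: real
  assumes S_psd: "pos_semidef S" and s_pos: "s > 0"
    and C_diag: "diagonal_mat C" and C_nz: "\<forall>i. C$i$i \<noteq> 0"
begin

definition "aa v = C *v (S *v (transpose C *v v))"
definition "MM = C ** S ** transpose C + s *\<^sub>R mat 1"

lemma S_sym: "sym_mat S" using S_psd by (simp add: pos_semidef_def)

lemma aa_sym: "x \<bullet> aa y = aa x \<bullet> y"
proof -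
  have "x \<bullet> aa y = (transpose C *v x) \<bullet> (S *v (transpose C *v y))"
    unfolding aa_def by (rule dot_transp)
  also have "\<dots> = (S *v (transpose C *v x)) \<bullet> (transpose C *v y)" by (rule sym_dot[OF S_sym])
  also have "\<dots> = aa x \<bullet> y" unfolding aa_def using dot_transp[of "S *v (transpose C *v x)" "transpose C" y]
    by (simp add: inner_commute)
  finally show ?thesis .
qed

lemma aa_psd: "v \<bullet> aa v \<ge> 0"
proof -
  have "v \<bullet> aa v = (transpose C *v v) \<bullet> (S *v (transpose C *v v))"
    unfolding aa_def by (rule dot_transp)
  thus ?thesis using S_psd by (simp add: pos_semidef_def)
qed

lemma aa_diff: "aa (x - y) = aa x - aa y"
  unfolding aa_def by (simp add: matrix_vector_mult_diff_distrib)

lemma aa_add: "aa (x + y) = aa x + aa y"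
  unfolding aa_def by (simp add: matrix_vector_right_distrib)

lemma MM_mv: "MM *v v = aa v + s *\<^sub>R v"
  unfolding MM_def aa_def
  by (simp add: matrix_vector_mult_add_rdistrib matrix_vector_mul_assoc[symmetric] scaleR_matrix_vector_assoc[symmetric])

lemma MM_inv: "MM ** matrix_inv MM = mat 1"
proof -
  have ker: "\<forall>x. MM *v x = 0 \<longrightarrow> x = 0"
  proof (intro allI impI)
    fix x assume "MM *v x = 0"
    hence "x \<bullet> (MM *v x) = 0" by simp
    hence "x \<bullet> aa x + s * (x \<bullet> x) = 0" by (simp add: MM_mv inner_add_right)
    moreover have "x \<bullet> aa x \<ge> 0" by (rule aa_psd)
    moreover have "s * (x \<bullet> x) \<ge> 0" using s_pos by simp
    ultimately have "s * (x \<bullet> x) = 0" by linarith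
    thus "x = 0" using s_pos by simp
  qed
  hence "invertible MM" using invertible_left_inverse matrix_left_invertible_ker by blast
  hence "\<exists>A'. MM ** A' = mat 1 \<and> A' ** MM = mat 1" by (simp add: invertible_def)
  hence "MM ** matrix_inv MM = mat 1 \<and> matrix_inv MM ** MM = mat 1"
    unfolding matrix_inv_def by (rule someI_ex)
  thus ?thesis by simp
qed

lemma MM_mv_inv: "MM *v (matrix_inv MM *v v) = v"
  by (simp add: matrix_vector_mul_assoc MM_inv)

definition "qq y = y \<bullet> (S *v y) - (C *v (S *v y)) \<bullet> (matrix_inv MM *v (C *v (S *v y)))"

lemma qq_upper: "qq y \<le> s * (\<Sum>i\<in>UNIV. (y$i / C$i$i)\<^sup>2)"
proof -
  define w where "w = (\<chi> i. y$i / C$i$i)"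
  have yw: "transpose C *v w = y"
    using diag_mv[OF diag_transpose[OF C_diag]] C_nz by (simp add: w_def vec_eq_iff transpose_def)
  define k where "k = matrix_inv MM *v aa w"
  have Mk: "aa k + s *\<^sub>R k = aa w" using MM_mv_inv[of "aa w"] unfolding k_def MM_mv .
  define d where "d = w - k"
  have ad: "aa d = s *\<^sub>R k" using Mk unfolding d_def aa_diff by (simp add: algebra_simps)
  have Cu: "C *v (S *v y) = aa w" unfolding aa_def yw ..
  have q1: "qq y = w \<bullet> aa w - aa w \<bullet> k"
  proof -
    have "y \<bullet> (S *v y) = w \<bullet> aa w"
      unfolding aa_def using dot_transp[of w C "S *v (transpose C *v w)"] yw by simp
    thus ?thesis unfolding qq_def Cu k_def by simp
  qed
  have awd: "aa w = s *\<^sub>R k + aa k" using ad unfolding d_def aa_diff by (simp add: algebra_simps)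
  have akd: "aa k \<bullet> d = s * (k \<bullet> k)" using aa_sym[of d k] ad by (simp add: inner_commute)
  have "qq y = aa w \<bullet> d" unfolding q1 d_def by (simp add: inner_diff_right inner_diff_left inner_commute)
  also have "\<dots> = s * (k \<bullet> d) + s * (k \<bullet> k)" unfolding awd using akd by (simp add: inner_add_left)
  finally have qd: "qq y = s * (k \<bullet> d) + s * (k \<bullet> k)" .
  have "d \<bullet> aa d \<ge> 0" by (rule aa_psd)
  hence kd: "s * (k \<bullet> d) \<ge> 0" using ad by (simp add: inner_commute)
  have ww: "w \<bullet> w = d \<bullet> d + 2 * (k \<bullet> d) + k \<bullet> k"
    unfolding d_def by (simp add: inner_diff_left inner_diff_right inner_commute)
  have "qq y \<le> s * (w \<bullet> w)"
  proof -
    have "s * (w \<bullet> w) - qq y = s * (d \<bullet> d) + s * (k \<bullet> d)" unfolding qd ww by (simp add: algebra_simps)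
    moreover have "s * (d \<bullet> d) \<ge> 0" using s_pos by simp
    ultimately show ?thesis using kd by linarith
  qed
  also have "w \<bullet> w = (\<Sum>i\<in>UNIV. (y$i / C$i$i)\<^sup>2)" unfolding inner_sum_sq w_def by simp
  finally show ?thesis .
qed

lemma qq_lower_eq:
  fixes y :: "real^'n"
  defines "k \<equiv> matrix_inv MM *v (C *v (S *v y))"
  shows "qq y = (y - transpose C *v k) \<bullet> (S *v (y - transpose C *v k)) + s * (k \<bullet> k)"
proof -
  define u where "u = S *v y"
  have Mk: "aa k + s *\<^sub>R k = C *v u" using MM_mv_inv[of "C *v u"] unfolding k_def u_def MM_mv .
  have e1: "y \<bullet> (S *v (transpose C *v k)) = (C *v u) \<bullet> k"
  proof -
    have "y \<bullet> (S *v (transpose C *v k)) = u \<bullet> (transpose C *v k)" unfolding u_def by (rule sym_dot[OF S_sym])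
    also have "\<dots> = (C *v u) \<bullet> k" using dot_transp[of u "transpose C" k] by simp
    finally show ?thesis .
  qed
  have e2: "(transpose C *v k) \<bullet> (S *v y) = k \<bullet> (C *v u)"
    unfolding u_def using dot_transp[of k C "S *v y"] by simp
  have e3: "(transpose C *v k) \<bullet> (S *v (transpose C *v k)) = k \<bullet> aa k"
    unfolding aa_def using dot_transp[of k C "S *v (transpose C *v k)"] by simp
  have e4: "k \<bullet> aa k + s * (k \<bullet> k) = k \<bullet> (C *v u)"
  proof -
    have "k \<bullet> (aa k + s *\<^sub>R k) = k \<bullet> (C *v u)" using Mk by simp
    thus ?thesis by (simp add: inner_add_right)
  qed
  have "(y - transpose C *v k) \<bullet> (S *v (y - transpose C *v k)) + s * (k \<bullet> k)
      = y \<bullet> (S *v y) - (C *v u) \<bullet> k - k \<bullet> (C *v u) + (k \<bullet> aa k + s * (k \<bullet> k))"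
    using e1 e2 e3 by (simp add: matrix_vector_mult_diff_distrib inner_diff_left inner_diff_right algebra_simps)
  also have "\<dots> = qq y"
  proof -
    have e5: "k \<bullet> (C *v u) = (C *v u) \<bullet> k" by (rule inner_commute)
    have qqe: "qq y = y \<bullet> (S *v y) - (C *v u) \<bullet> k" unfolding qq_def u_def k_def ..
    show ?thesis using e4 e5 qqe by linarith
  qed
  finally show ?thesis by simp
qed

lemma qq_nonneg: "qq y \<ge> 0"
  using qq_lower_eq[of y] S_psd s_pos by (simp add: pos_semidef_def)

lemma coord_bound:
  fixes l c y k :: real assumes "l \<ge> 0" "s > 0"
  shows "l * s * y\<^sup>2 / (s + l * c\<^sup>2) \<le> l * (y - c * k)\<^sup>2 + s * k\<^sup>2"
proof -
  have pos: "s + l * c\<^sup>2 > 0" using assms by (simp add: add_pos_nonneg)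
  have "(s + l * c\<^sup>2) * (l * (y - c * k)\<^sup>2 + s * k\<^sup>2) - l * s * y\<^sup>2 = (l * c * y - (s + l * c\<^sup>2) * k)\<^sup>2"
    by (simp add: power2_eq_square algebra_simps)
  hence "l * s * y\<^sup>2 \<le> (s + l * c\<^sup>2) * (l * (y - c * k)\<^sup>2 + s * k\<^sup>2)"
    using zero_le_power2[of "l * c * y - (s + l * c\<^sup>2) * k"] by linarith
  thus ?thesis using pos by (simp add: divide_le_eq mult.commute)
qed

lemma qq_lower:
  assumes lam: "\<And>x. l * (x \<bullet> x) \<le> x \<bullet> (S *v x)" and l0: "l \<ge> 0"
    and cu: "\<And>i. (C$i$i)\<^sup>2 \<le> cu2"
  shows "l * s / (s + l * cu2) * (y \<bullet> y) \<le> qq y"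
proof -
  define k where "k = matrix_inv MM *v (C *v (S *v y))"
  define r where "r = y - transpose C *v k"
  have r_i: "r$i = y$i - C$i$i * k$i" for i
    unfolding r_def using diag_mv[OF diag_transpose[OF C_diag]] by (simp add: transpose_def)
  have "l * s / (s + l * cu2) * (y \<bullet> y) = (\<Sum>i\<in>UNIV. l * s * (y$i)\<^sup>2 / (s + l * cu2))"
    by (simp add: inner_sum_sq sum_distrib_left)
  also have "\<dots> \<le> (\<Sum>i\<in>UNIV. l * (r$i)\<^sup>2 + s * (k$i)\<^sup>2)"
  proof (rule sum_mono)
    fix i
    have "l * s * (y$i)\<^sup>2 / (s + l * cu2) \<le> l * s * (y$i)\<^sup>2 / (s + l * (C$i$i)\<^sup>2)"
    proof -
      have c2: "l * (C$i$i)\<^sup>2 \<le> l * cu2" using cu[of i] l0 by (simp add: mult_left_mono)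
      have "0 \<le> l * (C$i$i)\<^sup>2" using l0 by simp
      hence p: "0 < s + l * (C$i$i)\<^sup>2" using s_pos by linarith
      have n: "0 \<le> l * s * (y$i)\<^sup>2" using l0 s_pos by simp
      show ?thesis by (rule divide_left_mono[OF _ n]) (use c2 p in auto)
    qed
    also have "\<dots> \<le> l * (r$i)\<^sup>2 + s * (k$i)\<^sup>2" unfolding r_i by (rule coord_bound[OF l0 s_pos])
    finally show "l * s * (y$i)\<^sup>2 / (s + l * cu2) \<le> l * (r$i)\<^sup>2 + s * (k$i)\<^sup>2" .
  qed
  also have "\<dots> = l * (r \<bullet> r) + s * (k \<bullet> k)"
    by (simp add: inner_sum_sq sum.distrib sum_distrib_left)
  also have "\<dots> \<le> r \<bullet> (S *v r) + s * (k \<bullet> k)" using lam[of r] by simp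
  also have "\<dots> = qq y" using qq_lower_eq[of y] unfolding r_def k_def by simp
  finally show ?thesis .
qed

end



lemma quad_expand:
  fixes H S C Mi W :: "real^'n^'n" and e :: "real^'n"
  assumes sym: "sym_mat S"
  defines "z \<equiv> transpose H *v e"
  shows "e \<bullet> ((H ** S ** transpose H - H ** S ** transpose C ** Mi ** C ** S ** transpose H + W) *v e)
    = z \<bullet> (S *v z) - (C *v (S *v z)) \<bullet> (Mi *v (C *v (S *v z))) + e \<bullet> (W *v e)"
proof -
  have 1: "(H ** S ** transpose H) *v e = H *v (S *v z)"
    unfolding z_def by (simp only: matrix_vector_mul_assoc[symmetric])
  have 2: "(H ** S ** transpose C ** Mi ** C ** S ** transpose H) *v e
      = H *v (S *v (transpose C *v (Mi *v (C *v (S *v z)))))"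
    unfolding z_def by (simp only: matrix_vector_mul_assoc[symmetric])
  have 3: "e \<bullet> (H *v v) = z \<bullet> v" for v unfolding z_def by (rule dot_transp)
  have 4: "z \<bullet> (S *v (transpose C *v m)) = (C *v (S *v z)) \<bullet> m" for m
  proof -
    have "z \<bullet> (S *v (transpose C *v m)) = (S *v z) \<bullet> (transpose C *v m)" by (rule sym_dot[OF sym])
    also have "\<dots> = (C *v (S *v z)) \<bullet> m" using dot_transp[of "S *v z" "transpose C" m] by simp
    finally show ?thesis .
  qed
  show ?thesis
    by (simp only: matrix_vector_mult_add_rdistrib matrix_vector_mult_diff_rdistrib inner_add_right
        inner_diff_right 1 2 3 4)
qed

lemma C_up_max: "((C::real^'n^'n)$i$i)\<^sup>2 \<le> (C_up C)\<^sup>2"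
proof -
  define f where "f i = (C$i$i)\<^sup>2" for i
  define m where "m = Max (range f)"
  have "m \<in> range f" unfolding m_def by (intro Max_in) auto
  then obtain k where k: "f k = m" by auto
  have le: "f x \<le> f k" for x unfolding k m_def by (intro Max_ge) auto
  have "f (arg_max f (\<lambda>_. True)) = f k" by (rule arg_max_equality) (use le in auto)
  hence "(C_up C)\<^sup>2 = f k" unfolding C_up_def f_def by simp
  thus ?thesis using le[of i] unfolding f_def by simp
qed

lemma C_low_min: "(C_low (C::real^'n^'n))\<^sup>2 \<le> (C$i$i)\<^sup>2 \<and> (\<exists>j. C_low C = C$j$j)"
proof -
  define f where "f i = (C$i$i)\<^sup>2" for i
  define m where "m = Min (range f)"
  have "m \<in> range f" unfolding m_def by (intro Min_in) auto
  then obtain k where k: "f k = m" by auto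
  have le: "f k \<le> f x" for x unfolding k m_def by (intro Min_le) auto
  have "f (arg_min f (\<lambda>_. True)) = f k" by (rule arg_min_equality) (use le in auto)
  hence "(C_low C)\<^sup>2 = f k" unfolding C_low_def f_def by simp
  thus ?thesis using le[of i] unfolding f_def C_low_def by auto
qed

theorem theorem5:
  fixes H W C \<Sigma> :: "real^'n^'n" and D :: "real^'m^'n"
    and \<Delta> \<delta> \<epsilon> \<sigma> Bl Bu \<eta>1 \<eta>3 :: real
  assumes W_pd: "pos_def W"
    and C_diag: "diagonal_mat C" and C_nz: "\<forall>i. C $ i $ i \<noteq> 0"
    and obs: "observable H C"
    and W_D: "W = D ** transpose D" and ctrb: "controllable H D"
    and Delta_pos: "\<Delta> > 0"
    and delta_range: "1/100000 \<le> \<delta>" "\<delta> \<le> 1/10"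
    and eps_pos: "\<epsilon> > 0"
    and sigma_def: "\<sigma> = \<Delta> / (2 * \<epsilon>) * (Qinv \<delta> + sqrt ((Qinv \<delta>)\<^sup>2 + 2 * \<epsilon>))"
    and Sigma_psd: "pos_semidef \<Sigma>"
    and Sigma_dare: "dare H C ((\<sigma>\<^sup>2) *\<^sub>R mat 1) W \<Sigma>"
    and Bl_lo: "trace W < Bl"
    and Bl_hi: "Bl < trace W + trace (transpose H ** H) * min_eig W"
    and Bu: "Bu > trace W"
    and eta1_def: "\<eta>1 = sqrt (((Bl - trace W) * min_eig W * (C_up C)\<^sup>2) /
                       (\<Delta>\<^sup>2 * (trace (transpose H ** H) * min_eig W - Bl + trace W)))"
    and eta3_def: "\<eta>3 = sqrt (((Bu - trace W) * (C_low C)\<^sup>2) / (\<Delta>\<^sup>2 * trace (transpose H ** H)))"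
  shows "(1/8 * ((1 + sqrt (36 * \<eta>3 + 1)) / \<eta>3)\<^sup>2 \<le> \<epsilon> \<longrightarrow> trace \<Sigma> \<le> Bu)
       \<and> (\<epsilon> \<le> 1 / \<eta>1 \<longrightarrow> trace \<Sigma> \<ge> Bl)"
proof -
  define K where "K = Qinv \<delta>"
  have K: "1 \<le> K" "K \<le> 9/2" using Qinv_bounds[OF delta_range] unfolding K_def by auto
  define t where "t = sqrt (2 * \<epsilon>)"
  have t0: "t > 0" unfolding t_def using eps_pos by simp
  have tt: "t\<^sup>2 = 2 * \<epsilon>" unfolding t_def using eps_pos by simp
  have sig: "\<sigma> = \<Delta> / (2 * \<epsilon>) * (K + sqrt (K\<^sup>2 + t\<^sup>2))" unfolding sigma_def K_def tt ..
  have sqK: "K \<le> sqrt (K\<^sup>2 + t\<^sup>2)" using K by (intro real_le_rsqrt) simp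
  have sqK2: "sqrt (K\<^sup>2 + t\<^sup>2) \<le> K + t"
  proof -
    have "K\<^sup>2 + t\<^sup>2 \<le> (K + t)\<^sup>2" using K t0 by (simp add: power2_eq_square algebra_simps)
    hence "sqrt (K\<^sup>2 + t\<^sup>2) \<le> sqrt ((K + t)\<^sup>2)" by (rule real_sqrt_le_mono)
    thus ?thesis using K t0 by simp
  qed
  have Ksp: "0 < K + sqrt (K\<^sup>2 + t\<^sup>2)" using K sqK by linarith
  have sig_pos: "\<sigma> > 0" unfolding sig using Ksp Delta_pos eps_pos by (intro mult_pos_pos divide_pos_pos) auto
  define s where "s = \<sigma>\<^sup>2"
  have s_pos: "s > 0" unfolding s_def using sig_pos by simp
  note ctx = Sigma_psd s_pos C_diag C_nz
  have S_sym: "sym_mat \<Sigma>" using Sigma_psd by (simp add: pos_semidef_def)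
  have W_sym: "sym_mat W" using W_pd by (simp add: pos_def_def)
  have dare': "\<Sigma> = H ** \<Sigma> ** transpose H - H ** \<Sigma> ** transpose C ** matrix_inv (MM C \<Sigma> s) ** C ** \<Sigma> ** transpose H + W"
  proof -
    have mm: "MM C \<Sigma> s = C ** \<Sigma> ** transpose C + (\<sigma>\<^sup>2) *\<^sub>R mat 1"
      unfolding s_def[symmetric] by (rule MM_def[OF ctx])
    show ?thesis using Sigma_dare unfolding dare_def mm .
  qed
  have quad: "x \<bullet> (\<Sigma> *v x) = qq C \<Sigma> s (transpose H *v x) + x \<bullet> (W *v x)" for x
  proof -
    have "x \<bullet> (\<Sigma> *v x) = x \<bullet> ((H ** \<Sigma> ** transpose H - H ** \<Sigma> ** transpose C ** matrix_inv (MM C \<Sigma> s) ** C ** \<Sigma> ** transpose H + W) *v x)"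
      using dare' by (rule arg_cong)
    also have "\<dots> = qq C \<Sigma> s (transpose H *v x) + x \<bullet> (W *v x)"
      unfolding quad_expand[OF S_sym] qq_def[OF ctx] ..
    finally show ?thesis .
  qed
  define T where "T = trace (transpose H ** H)"
  have T_sum: "T = (\<Sum>i\<in>UNIV. row i H \<bullet> row i H)" unfolding T_def by (rule trace_HtH)
  have T0: "T \<ge> 0" unfolding T_sum by (intro sum_nonneg) simp
  have tr: "trace \<Sigma> = (\<Sum>i\<in>UNIV. qq C \<Sigma> s (row i H)) + trace W"
  proof -
    have "trace \<Sigma> = (\<Sum>i\<in>UNIV. qq C \<Sigma> s (row i H) + W$i$i)"
      unfolding trace_def
    proof (rule sum.cong[OF refl])
      fix i
      show "\<Sigma>$i$i = qq C \<Sigma> s (row i H) + W$i$i"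
        using quad[of "axis i 1"] by (simp only: diag_entry[symmetric] transp_axis)
    qed
    thus ?thesis by (simp add: sum.distrib trace_def)
  qed
  have part1: "1/8 * ((1 + sqrt (36 * \<eta>3 + 1)) / \<eta>3)\<^sup>2 \<le> \<epsilon> \<longrightarrow> trace \<Sigma> \<le> Bu"
  proof
    assume epsc: "1/8 * ((1 + sqrt (36 * \<eta>3 + 1)) / \<eta>3)\<^sup>2 \<le> \<epsilon>"
    obtain j where Clj: "C_low C = C$j$j" using C_low_min by blast
    define cl where "cl = C_low C"
    have cl2: "cl\<^sup>2 > 0" unfolding cl_def Clj using C_nz by simp
    have clle: "cl\<^sup>2 \<le> (C$i$i)\<^sup>2" for i unfolding cl_def using C_low_min by blast
    show "trace \<Sigma> \<le> Bu"
    proof (cases "T = 0")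
      case True
      have "qq C \<Sigma> s (row i H) = 0" for i
      proof -
        have "row i H \<bullet> row i H = 0" using True unfolding T_sum
          by (simp add: sum_nonneg_eq_0_iff)
        hence "row i H = 0" by simp
        thus ?thesis unfolding qq_def[OF ctx] by simp
      qed
      thus ?thesis using tr Bu by simp
    next
      case False
      hence Tp: "T > 0" using T0 by simp
      define b where "b = (Bu - trace W) * cl\<^sup>2 / (\<Delta>\<^sup>2 * T)"
      have bp: "b > 0" unfolding b_def using Bu cl2 Tp Delta_pos by simp
      have e3: "\<eta>3 = sqrt b" unfolding eta3_def b_def cl_def T_def ..
      have e3p: "\<eta>3 > 0" using bp e3 by simp
      have e3sq: "\<eta>3\<^sup>2 = b" using bp e3 by simp
      define R where "R = sqrt (36 * \<eta>3 + 1)"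
      have R0a: "0 \<le> 36 * \<eta>3 + 1" using e3p by simp
      hence R0: "R \<ge> 0" unfolding R_def by simp
      from R0a have RR: "R\<^sup>2 = 36 * \<eta>3 + 1" unfolding R_def by simp
      have "((1 + R) / \<eta>3)\<^sup>2 \<le> (2 * t)\<^sup>2" using epsc tt unfolding R_def by (simp add: power2_eq_square)
      hence q1: "(1 + R) / \<eta>3 \<le> 2 * t" by (rule power2_le_imp_le) (use t0 in simp)
      have h1: "1 + R \<le> 2 * t * \<eta>3" using q1 pos_divide_le_eq[OF e3p] by simp
      have "R\<^sup>2 \<le> (2 * t * \<eta>3 - 1)\<^sup>2" using h1 R0 by (intro power_mono) auto
      moreover have "(2 * t * \<eta>3 - 1)\<^sup>2 = 4 * t\<^sup>2 * \<eta>3\<^sup>2 - 4 * t * \<eta>3 + 1"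
        by (simp add: power2_eq_square algebra_simps)
      ultimately have "36 * \<eta>3 \<le> 4 * t\<^sup>2 * \<eta>3\<^sup>2 - 4 * t * \<eta>3" unfolding RR by linarith
      moreover have "4 * t\<^sup>2 * \<eta>3\<^sup>2 - 4 * t * \<eta>3 = \<eta>3 * (4 * (t\<^sup>2 * \<eta>3 - t))"
        by (simp add: power2_eq_square algebra_simps)
      ultimately have "\<eta>3 * 36 \<le> \<eta>3 * (4 * (t\<^sup>2 * \<eta>3 - t))" by linarith
      hence "36 \<le> 4 * (t\<^sup>2 * \<eta>3 - t)" using mult_le_cancel_left_pos[OF e3p] by blast
      hence h2: "9 \<le> t\<^sup>2 * \<eta>3 - t" by (simp add: algebra_simps)
      have "K + sqrt (K\<^sup>2 + t\<^sup>2) \<le> t\<^sup>2 * \<eta>3" using sqK2 K h2 by linarith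
      hence "K + sqrt (K\<^sup>2 + t\<^sup>2) \<le> 2 * \<epsilon> * \<eta>3" unfolding tt .
      hence "\<sigma> \<le> \<Delta> / (2 * \<epsilon>) * (2 * \<epsilon> * \<eta>3)" unfolding sig
        using Delta_pos eps_pos by (intro mult_left_mono) auto
      hence sle: "\<sigma> \<le> \<Delta> * \<eta>3" using eps_pos by simp
      have "s \<le> (\<Delta> * \<eta>3)\<^sup>2" unfolding s_def using sle sig_pos by (intro power_mono) auto
      hence "s \<le> \<Delta>\<^sup>2 * b" by (simp add: power_mult_distrib e3sq)
      hence sb: "s \<le> (Bu - trace W) * cl\<^sup>2 / T" unfolding b_def using Delta_pos by simp
      have "(\<Sum>i\<in>UNIV. qq C \<Sigma> s (row i H)) \<le> (\<Sum>i\<in>UNIV. s / cl\<^sup>2 * (row i H \<bullet> row i H))"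
      proof (rule sum_mono)
        fix i
        have "qq C \<Sigma> s (row i H) \<le> s * (\<Sum>j\<in>UNIV. (row i H $ j / C$j$j)\<^sup>2)" by (rule qq_upper[OF ctx])
        also have "\<dots> \<le> s * (\<Sum>j\<in>UNIV. (row i H $ j)\<^sup>2 / cl\<^sup>2)"
        proof (intro mult_left_mono sum_mono)
          fix j
          have eq: "(row i H $ j / C$j$j)\<^sup>2 = (row i H $ j)\<^sup>2 / (C$j$j)\<^sup>2" by (simp add: power_divide)
          have cj: "(C$j$j)\<^sup>2 > 0" using clle[of j] cl2 by linarith
          have le: "(row i H $ j)\<^sup>2 / (C$j$j)\<^sup>2 \<le> (row i H $ j)\<^sup>2 / cl\<^sup>2"
            by (rule divide_left_mono[OF clle[of j] zero_le_power2 mult_pos_pos[OF cj cl2]])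
          show "(row i H $ j / C$j$j)\<^sup>2 \<le> (row i H $ j)\<^sup>2 / cl\<^sup>2" unfolding eq by (rule le)
        qed (use s_pos in auto)
        also have "\<dots> = s / cl\<^sup>2 * (row i H \<bullet> row i H)"
          by (simp add: inner_sum_sq sum_divide_distrib[symmetric])
        finally show "qq C \<Sigma> s (row i H) \<le> s / cl\<^sup>2 * (row i H \<bullet> row i H)" .
      qed
      also have "\<dots> = s / cl\<^sup>2 * T" unfolding T_sum by (simp add: sum_distrib_left)
      also have "\<dots> \<le> Bu - trace W"
      proof -
        have "s * T \<le> (Bu - trace W) * cl\<^sup>2" using sb Tp by (simp add: le_divide_eq)
        thus ?thesis using cl2 by (simp add: divide_le_eq mult.commute)
      qed
      finally show ?thesis using tr by simp
    qed
  qed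
  have part2: "\<epsilon> \<le> 1 / \<eta>1 \<longrightarrow> trace \<Sigma> \<ge> Bl"
  proof
    assume epsc: "\<epsilon> \<le> 1 / \<eta>1"
    define l where "l = min_eig W"
    define cu2 where "cu2 = (C_up C)\<^sup>2"
    define bb where "bb = Bl - trace W"
    have bbp: "bb > 0" unfolding bb_def using Bl_lo by simp
    have Tl: "T * l > bb" using Bl_hi unfolding bb_def T_def l_def by simp
    have lp: "l > 0"
    proof (rule ccontr)
      assume "\<not> l > 0"
      hence "T * l \<le> 0" using T0 by (simp add: mult_nonneg_nonpos)
      thus False using Tl bbp by simp
    qed
    have cu2p: "cu2 > 0"
    proof -
      obtain i :: 'n where True by simp
      have "(C$i$i)\<^sup>2 > 0" using C_nz by simp
      thus ?thesis unfolding cu2_def using C_up_max[of C i] by linarith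
    qed
    have cuc: "(C$i$i)\<^sup>2 \<le> cu2" for i unfolding cu2_def by (rule C_up_max)
    define a where "a = bb * l * cu2 / (\<Delta>\<^sup>2 * (T * l - bb))"
    have ap: "a > 0" unfolding a_def using bbp lp cu2p Tl Delta_pos by simp
    have e1: "\<eta>1 = sqrt a" unfolding eta1_def a_def bb_def l_def cu2_def T_def by (simp add: algebra_simps)
    have e1p: "\<eta>1 > 0" using e1 ap by simp
    have e1sq: "\<eta>1\<^sup>2 = a" using e1 ap by simp
    have "\<eta>1 \<le> 1 / \<epsilon>" using epsc e1p eps_pos by (simp add: le_divide_eq divide_le_eq mult.commute)
    hence "\<Delta> * \<eta>1 \<le> \<Delta> / \<epsilon>" using Delta_pos by (simp add: mult_left_mono divide_inverse)
    also have "\<Delta> / \<epsilon> \<le> \<sigma>"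
    proof -
      have "2 \<le> K + sqrt (K\<^sup>2 + t\<^sup>2)" using K sqK by linarith
      hence "\<Delta> / (2 * \<epsilon>) * 2 \<le> \<Delta> / (2 * \<epsilon>) * (K + sqrt (K\<^sup>2 + t\<^sup>2))"
        using Delta_pos eps_pos by (intro mult_left_mono) auto
      thus ?thesis unfolding sig using eps_pos by simp
    qed
    finally have sge: "\<Delta> * \<eta>1 \<le> \<sigma>" .
    have "(\<Delta> * \<eta>1)\<^sup>2 \<le> s" unfolding s_def using sge Delta_pos e1p by (intro power_mono) auto
    hence "\<Delta>\<^sup>2 * a \<le> s" by (simp add: power_mult_distrib e1sq)
    hence sa: "bb * l * cu2 / (T * l - bb) \<le> s" unfolding a_def using Delta_pos by simp
    have Sl: "l * (x \<bullet> x) \<le> x \<bullet> (\<Sigma> *v x)" for x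
    proof -
      have "l * (x \<bullet> x) \<le> x \<bullet> (W *v x)" unfolding l_def by (rule min_eig_bound[OF W_sym])
      moreover have "qq C \<Sigma> s (transpose H *v x) \<ge> 0" by (rule qq_nonneg[OF ctx])
      ultimately show ?thesis using quad[of x] by linarith
    qed
    have "bb \<le> l * s / (s + l * cu2) * T"
    proof -
      have "bb * l * cu2 \<le> s * (T * l - bb)" using sa Tl by (simp add: divide_le_eq)
      hence "bb * (s + l * cu2) \<le> l * s * T" by (simp add: algebra_simps)
      moreover have "s + l * cu2 > 0" using s_pos lp cu2p by (simp add: add_pos_pos)
      ultimately show ?thesis by (simp add: le_divide_eq mult.commute mult.left_commute)
    qed
    also have "\<dots> = (\<Sum>i\<in>UNIV. l * s / (s + l * cu2) * (row i H \<bullet> row i H))"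
      unfolding T_sum by (simp add: sum_distrib_left)
    also have "\<dots> \<le> (\<Sum>i\<in>UNIV. qq C \<Sigma> s (row i H))"
      by (intro sum_mono qq_lower[OF ctx Sl]) (use lp cuc in auto)
    finally show "trace \<Sigma> \<ge> Bl" using tr unfolding bb_def by simp
  qed
  show ?thesis using part1 part2 by blast
qed


end
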